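(* Let $(\mathsf{E},\mathcal{F},\mu)$ be a probability space, let $P_{1},P_{2}$ be $\mu$-invariant Markov kernels, and for each $i\in\{1,2\}$ let $T_{i}$ be either $P_{i}$ or $P_{i}^{*}P_{i}$. Let $\beta_{1},\beta_{2}:(0,\infty)\to(0,\infty)$ be decreasing with $\beta_{i}(s)\downarrow0$ as $s\to\infty$, and let $\Phi_{1},\Phi_{2}:\mathrm{L}^{2}(\mu)\to[0,\infty]$ be such that for $i=1,2$, all $f\in\mathrm{L}^{2}(\mu)$, $c>0$, $n\in\mathbb{N}$: $\Phi_{i}(cf)=c^{2}\Phi_{i}(f)$, $\Phi_{i}(P_{i}^{n}f)\le\Phi_{i}(f)$, $\|f-\mu(f)\|_{2}^{2}\le a_{i}\Phi_{i}(f-\mu(f))$ with $a_{i}:=\sup_{g\in\mathrm{L}_{0}^{2}(\mu)\setminus\{0\}}\|g\|_{2}^{2}/\Phi_{i}(g)$; assume also $\Phi_{1}(P_{2}^{n}f)\le\Phi_{1}(f)$ for all $n\in\mathbb{N}$, $f\in\mathrm{L}_{0}^{2}(\mu)$. Assume that for all $s>0$ and $f\in\mathrm{L}_{0}^{2}(\mu)$, \[ \|f\|_{2}^{2}\le s\,\mathcal{E}(T_{1},f)+\beta_{1}(s)\Phi_{1}(f),\qquad\mathcal{E}(T_{1},f)\le s\,\mathcal{E}(T_{2},f)+\beta_{2}(s)\Phi_{2}(f). \] Set $\Phi:=\Phi_{1}\vee\Phi_{2}$ and $\beta(s):=\inf\{s_{1}\beta_{2}(s_{2})+\beta_{1}(s_{1}):s_{1}>0,s_{2}>0,s_{1}s_{2}=s\}$.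 Then for all $s>0$ and $f\in\mathrm{L}_{0}^{2}(\mu)$, \[ \|f\|_{2}^{2}\le s\,\mathcal{E}(T_{2},f)+\beta(s)\Phi(f); \] moreover $\beta:(0,\infty)\to(0,\infty)$ is decreasing with $\beta(s)\downarrow0$ as $s\to\infty$, $\Phi(cf)=c^{2}\Phi(f)$ for $c>0$, and $\Phi(P_{2}^{n}f)\le\Phi(f)$ for all $n\in\mathbb{N}$, $f\in\mathrm{L}_{0}^{2}(\mu)$. Finally, writing $K_{i}(u):=u\beta_{i}(1/u)$, $K(u):=u\beta(1/u)$ for $u>0$ and $K^{*},K_{i}^{*}$ for the convex conjugates $K^{*}(v)=\sup_{u\ge0}\{uv-K(u)\}$ (with $K(0)=K_{i}(0)=0$), one has \[ K(u)=\inf\{K_{2}(u_{2})+u_{2}K_{1}(u_{1}):u_{1}>0,u_{2}>0,u_{1}u_{2}=u\},\qquad K^{*}=K_{2}^{*}\circ K_{1}^{*}. \]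
   Context: $\mathrm{L}^{2}(\mu)$ has inner product $\langle f,g\rangle=\int fg\,\mathrm{d}\mu$, norm $\|\cdot\|_{2}$; $\mathrm{L}_{0}^{2}(\mu)$ is the mean-zero subspace; $P^{*}$ is the $\mathrm{L}^{2}(\mu)$-adjoint of $P$; $\mathcal{E}(T,f):=\langle(\mathrm{Id}-T)f,f\rangle$. *)

theory Defs
  imports "HOL-Probability.Probability"
begin

definition L2 :: "'a measure \<Rightarrow> ('a \<Rightarrow> real) set" where
  "L2 M = {f. f \<in> borel_measurable M \<and> integrable M (\<lambda>x. (f x)\<^sup>2)}"

definition L2_0 :: "'a measure \<Rightarrow> ('a \<Rightarrow> real) set" where
  "L2_0 M = {f \<in> L2 M. (\<integral>x. f x \<partial>M) = 0}"

definition inner_L2 :: "'a measure \<Rightarrow> ('a \<Rightarrow> real) \<Rightarrow> ('a \<Rightarrow> real) \<Rightarrow> real" where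
  "inner_L2 M f g = (\<integral>x. f x * g x \<partial>M)"

definition normsq_L2 :: "'a measure \<Rightarrow> ('a \<Rightarrow> real) \<Rightarrow> real" where
  "normsq_L2 M f = (\<integral>x. (f x)\<^sup>2 \<partial>M)"

definition dirichlet :: "'a measure \<Rightarrow> (('a \<Rightarrow> real) \<Rightarrow> ('a \<Rightarrow> real)) \<Rightarrow> ('a \<Rightarrow> real) \<Rightarrow> real" where
  "dirichlet M T f = inner_L2 M (\<lambda>x. f x - T f x) f"

definition invariant_markov_kernel :: "'a measure \<Rightarrow> ('a \<Rightarrow> 'a measure) \<Rightarrow> bool" where
  "invariant_markov_kernel M P \<longleftrightarrow> P \<in> M \<rightarrow>\<^sub>M prob_algebra M \<and> Giry_Monad.bind M P = M"

definition kop :: "('a \<Rightarrow> 'a measure) \<Rightarrow> ('a \<Rightarrow> real) \<Rightarrow> ('a \<Rightarrow> real)" where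
  "kop P f = (\<lambda>x. \<integral>y. f y \<partial>(P x))"

definition L2_adjoint :: "'a measure \<Rightarrow> (('a \<Rightarrow> real) \<Rightarrow> ('a \<Rightarrow> real)) \<Rightarrow> (('a \<Rightarrow> real) \<Rightarrow> ('a \<Rightarrow> real)) \<Rightarrow> bool" where
  "L2_adjoint M A B \<longleftrightarrow> (\<forall>g\<in>L2 M. B g \<in> L2 M) \<and>
     (\<forall>f\<in>L2 M. \<forall>g\<in>L2 M. inner_L2 M (A f) g = inner_L2 M f (B g))"

definition P_or_PstarP :: "'a measure \<Rightarrow> ('a \<Rightarrow> 'a measure) \<Rightarrow> (('a \<Rightarrow> real) \<Rightarrow> ('a \<Rightarrow> real)) \<Rightarrow> bool" where
  "P_or_PstarP M P T \<longleftrightarrow> T = kop P \<or> (\<exists>Q. L2_adjoint M (kop P) Q \<and> T = Q \<circ> kop P)"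

definition a_const :: "'a measure \<Rightarrow> (('a \<Rightarrow> real) \<Rightarrow> ennreal) \<Rightarrow> ennreal" where
  "a_const M \<Phi> = (SUP g\<in>{g \<in> L2_0 M. normsq_L2 M g \<noteq> 0}. ennreal (normsq_L2 M g) / \<Phi> g)"

definition beta_comb :: "(real \<Rightarrow> real) \<Rightarrow> (real \<Rightarrow> real) \<Rightarrow> real \<Rightarrow> real" where
  "beta_comb \<beta>1 \<beta>2 s = Inf {s1 * \<beta>2 s2 + \<beta>1 s1 | s1 s2. s1 > 0 \<and> s2 > 0 \<and> s1 * s2 = s}"

text \<open>K(u) = u beta(1/u) for u > 0, K(0) = 0 (values at u < 0 are irrelevant).\<close>
definition Kfun :: "(real \<Rightarrow> real) \<Rightarrow> real \<Rightarrow> real" where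
  "Kfun \<beta> u = (if u > 0 then u * \<beta> (1 / u) else 0)"

definition convex_conj :: "(real \<Rightarrow> real) \<Rightarrow> ereal \<Rightarrow> ereal" where
  "convex_conj K v = (SUP u\<in>{0::real..}. ereal u * v - ereal (K u))"

end

theory Submission
  imports Defs
begin

lemma bc_lower:
  assumes p1: "\<forall>s>0. \<beta>1 s > (0::real)" and p2: "\<forall>s>0. \<beta>2 s > (0::real)"
    and "s1 > 0" "s2 > 0"
  shows "beta_comb \<beta>1 \<beta>2 (s1 * s2) \<le> s1 * \<beta>2 s2 + \<beta>1 s1"
  unfolding beta_comb_def
proof (rule cInf_lower)
  show "s1 * \<beta>2 s2 + \<beta>1 s1 \<in> {s1' * \<beta>2 s2' + \<beta>1 s1' | s1' s2'. s1' > 0 \<and> s2' > 0 \<and> s1' * s2' = s1 * s2}"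
    using assms by blast
  show "bdd_below {s1' * \<beta>2 s2' + \<beta>1 s1' | s1' s2'. s1' > 0 \<and> s2' > 0 \<and> s1' * s2' = s1 * s2}"
    by (rule bdd_belowI[of _ 0]) (use p1 p2 in \<open>force intro: add_nonneg_nonneg mult_nonneg_nonneg less_imp_le\<close>)
qed

lemma bc_greatest:
  assumes "s > 0" "\<And>s1 s2. s1>0 \<Longrightarrow> s2>0 \<Longrightarrow> s1 * s2 = s \<Longrightarrow> c \<le> s1 * \<beta>2 s2 + \<beta>1 s1"
  shows "c \<le> beta_comb \<beta>1 \<beta>2 s"
  unfolding beta_comb_def
proof (rule cInf_greatest)
  show "{s1 * \<beta>2 s2 + \<beta>1 s1 | s1 s2. s1 > 0 \<and> s2 > 0 \<and> s1 * s2 = s} \<noteq> {}"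
  proof -
    have "1 * \<beta>2 s + \<beta>1 1 \<in> {s1 * \<beta>2 s2 + \<beta>1 s1 | s1 s2. s1 > 0 \<and> s2 > 0 \<and> s1 * s2 = s}"
      using assms(1) by (intro CollectI exI[of _ "1::real"] exI[of _ s]) simp
    then show ?thesis by blast
  qed
qed (use assms in auto)

lemma bc_pos:
  assumes p1: "\<forall>s>0. \<beta>1 s > (0::real)" and p2: "\<forall>s>0. \<beta>2 s > (0::real)"
    and d1: "antimono_on {0<..} \<beta>1" and d2: "antimono_on {0<..} \<beta>2" and s: "s > 0"
  shows "beta_comb \<beta>1 \<beta>2 s > 0"
proof -
  have "min (\<beta>1 1) (\<beta>2 s) \<le> beta_comb \<beta>1 \<beta>2 s"
  proof (rule bc_greatest[OF s])
    fix s1 s2 :: real assume a: "s1 > 0" "s2 > 0" "s1 * s2 = s"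
    show "min (\<beta>1 1) (\<beta>2 s) \<le> s1 * \<beta>2 s2 + \<beta>1 s1"
    proof (cases "s1 \<le> 1")
      case True
      have "\<beta>1 1 \<le> \<beta>1 s1" using monotone_onD[OF d1, of s1 1] a True by auto
      moreover have "0 \<le> s1 * \<beta>2 s2" using a p2 by (simp add: less_imp_le)
      ultimately show ?thesis by linarith
    next
      case False
      have "s2 \<le> s" using a False by (metis mult_le_cancel_right1 less_eq_real_def not_le)
      then have "\<beta>2 s \<le> \<beta>2 s2" using monotone_onD[OF d2, of s2 s] a s by auto
      moreover have "\<beta>2 s2 > 0" using a p2 by simp
      then have "\<beta>2 s2 \<le> s1 * \<beta>2 s2" using False
        by (simp add: mult_le_cancel_right1 less_imp_le)
      moreover have "0 \<le> \<beta>1 s1" using a p1 by (simp add: less_imp_le)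
      ultimately show ?thesis by linarith
    qed
  qed
  moreover have "min (\<beta>1 1) (\<beta>2 s) > 0" using p1 p2 s by simp
  ultimately show ?thesis by linarith
qed

lemma bc_antimono:
  assumes p1: "\<forall>s>0. \<beta>1 s > (0::real)" and p2: "\<forall>s>0. \<beta>2 s > (0::real)"
    and d2: "antimono_on {0<..} \<beta>2"
  shows "antimono_on {0<..} (beta_comb \<beta>1 \<beta>2)"
proof (rule monotone_onI)
  fix s s' :: real assume a: "s \<in> {0<..}" "s' \<in> {0<..}" "s \<le> s'"
  show "beta_comb \<beta>1 \<beta>2 s' \<le> beta_comb \<beta>1 \<beta>2 s"
  proof (rule bc_greatest)
    show "s > 0" using a by simp
    fix s1 s2 :: real assume b: "s1>0" "s2>0" "s1 * s2 = s"
    have "beta_comb \<beta>1 \<beta>2 (s1 * (s'/s1)) \<le> s1 * \<beta>2 (s'/s1) + \<beta>1 s1"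
      using bc_lower[OF p1 p2, of s1 "s'/s1"] a b by simp
    moreover have "s1 * (s'/s1) = s'" using b by simp
    moreover have "s2 \<le> s'/s1" using a b by (simp add: field_simps mult.commute)
    then have "\<beta>2 (s'/s1) \<le> \<beta>2 s2" using monotone_onD[OF d2, of s2 "s'/s1"] a b by auto
    then have "s1 * \<beta>2 (s'/s1) \<le> s1 * \<beta>2 s2" using b by simp
    ultimately show "beta_comb \<beta>1 \<beta>2 s' \<le> s1 * \<beta>2 s2 + \<beta>1 s1" by (metis add_right_mono order_trans)
  qed
qed

lemma bc_lim:
  assumes p1: "\<forall>s>0. \<beta>1 s > (0::real)" and p2: "\<forall>s>0. \<beta>2 s > (0::real)"
    and d1: "antimono_on {0<..} \<beta>1" and d2: "antimono_on {0<..} \<beta>2"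
    and l1: "(\<beta>1 \<longlongrightarrow> 0) at_top" and l2: "(\<beta>2 \<longlongrightarrow> 0) at_top"
  shows "(beta_comb \<beta>1 \<beta>2 \<longlongrightarrow> 0) at_top"
proof (rule tendstoI)
  fix e :: real assume e: "e > 0"
  have "\<forall>\<^sub>F x in at_top. dist (\<beta>1 x) 0 < e/2" using tendstoD[OF l1, of "e/2"] e by simp
  then obtain A where A: "\<And>x. x \<ge> A \<Longrightarrow> dist (\<beta>1 x) 0 < e/2"
    by (auto simp: eventually_at_top_linorder)
  define s1 where "s1 = max A 1"
  have s1: "s1 > 0" "\<beta>1 s1 < e/2" using A[of s1] by (auto simp: s1_def)
  have "\<forall>\<^sub>F x in at_top. dist (\<beta>2 x) 0 < e/(2 * s1)" using tendstoD[OF l2, of "e/(2 * s1)"] e s1 by simp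
  then obtain B where B: "\<And>x. x \<ge> B \<Longrightarrow> dist (\<beta>2 x) 0 < e/(2 * s1)"
    by (auto simp: eventually_at_top_linorder)
  show "\<forall>\<^sub>F x in at_top. dist (beta_comb \<beta>1 \<beta>2 x) 0 < e"
    unfolding eventually_at_top_linorder
  proof (intro exI[of _ "s1 * max B 1"] allI impI)
    fix s assume s: "s \<ge> s1 * max B 1"
    then have spos: "s > 0" using s1 by (smt (verit) mult_pos_pos)
    have "s/s1 \<ge> B" using s s1 by (simp add: field_simps) (metis max.cobounded1 mult.commute mult_left_mono less_imp_le order_trans)
    then have "\<beta>2 (s/s1) < e/(2 * s1)" using B[of "s/s1"] by simp
    then have "s1 * \<beta>2 (s/s1) < e/2" using s1 by (simp add: field_simps)
    moreover have "beta_comb \<beta>1 \<beta>2 (s1 * (s/s1)) \<le> s1 * \<beta>2 (s/s1) + \<beta>1 s1"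
      using bc_lower[OF p1 p2, of s1 "s/s1"] s1 spos by simp
    moreover have "s1 * (s/s1) = s" using s1 by simp
    moreover have "beta_comb \<beta>1 \<beta>2 s > 0" using bc_pos[OF p1 p2 d1 d2 spos] .
    ultimately show "dist (beta_comb \<beta>1 \<beta>2 s) 0 < e" using s1 by simp
  qed
qed



lemma conj_ge0:
  assumes "F 0 = 0" shows "convex_conj F w \<ge> 0"
  unfolding convex_conj_def
  by (rule SUP_upper2[of 0]) (use assms in \<open>auto simp: zero_ereal_def[symmetric]\<close>)

lemma conj_upper:
  assumes "u \<ge> 0" shows "ereal u * w - ereal (F u) \<le> convex_conj F w"
  unfolding convex_conj_def by (rule SUP_upper) (use assms in auto)

lemma conj_comp:
  fixes K K1 K2 :: "real \<Rightarrow> real"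
  assumes K0: "K 0 = 0" "K1 0 = 0" "K2 0 = 0"
    and nn1: "\<forall>u\<ge>0. K1 u \<ge> 0" and nn2: "\<forall>u\<ge>0. K2 u \<ge> 0"
    and KT: "\<forall>u>0. K u = Inf {K2 u2 + u2 * K1 u1 | u1 u2. u1 > 0 \<and> u2 > 0 \<and> u1 * u2 = u}"
  shows "convex_conj K v = convex_conj K2 (convex_conj K1 v)"
proof -
  have Klow: "K (u1 * u2) \<le> K2 u2 + u2 * K1 u1" if "u1 > 0" "u2 > 0" for u1 u2
  proof -
    have "Inf {K2 u2' + u2' * K1 u1' | u1' u2'. u1' > 0 \<and> u2' > 0 \<and> u1' * u2' = u1 * u2}
          \<le> K2 u2 + u2 * K1 u1"
    proof (rule cInf_lower)
      show "K2 u2 + u2 * K1 u1 \<in> {K2 u2' + u2' * K1 u1' | u1' u2'. u1' > 0 \<and> u2' > 0 \<and> u1' * u2' = u1 * u2}"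
        using that by blast
      show "bdd_below {K2 u2' + u2' * K1 u1' | u1' u2'. u1' > 0 \<and> u2' > 0 \<and> u1' * u2' = u1 * u2}"
        by (rule bdd_belowI[of _ 0]) (use nn1 nn2 in \<open>force intro: add_nonneg_nonneg mult_nonneg_nonneg less_imp_le\<close>)
    qed
    then show ?thesis using KT that by simp
  qed
  have Kgreat: "c \<le> K u" if u: "u > 0" and h: "\<And>u1 u2. u1 > 0 \<Longrightarrow> u2 > 0 \<Longrightarrow> u1 * u2 = u \<Longrightarrow> c \<le> K2 u2 + u2 * K1 u1" for c u
  proof -
    have "c \<le> Inf {K2 u2 + u2 * K1 u1 | u1 u2. u1 > 0 \<and> u2 > 0 \<and> u1 * u2 = u}"
    proof (rule cInf_greatest)
      have "K2 1 + 1 * K1 u \<in> {K2 u2 + u2 * K1 u1 | u1 u2. u1 > 0 \<and> u2 > 0 \<and> u1 * u2 = u}"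
        using u by (intro CollectI exI[of _ u] exI[of _ "1::real"]) simp
      then show "{K2 u2 + u2 * K1 u1 | u1 u2. u1 > 0 \<and> u2 > 0 \<and> u1 * u2 = u} \<noteq> {}" by blast
    qed (use h in auto)
    then show ?thesis using KT u by simp
  qed
  define C1 where "C1 = convex_conj K1 v"
  define R where "R = convex_conj K2 C1"
  define L where "L = convex_conj K v"
  have R0: "R \<ge> 0" unfolding R_def by (rule conj_ge0[of K2, OF K0(3)])
  have L0: "L \<ge> 0" unfolding L_def by (rule conj_ge0[of K, OF K0(1)])
  have "L \<le> R" unfolding L_def convex_conj_def
  proof (rule SUP_least)
    fix u assume u: "u \<in> {0::real..}"
    show "ereal u * v - ereal (K u) \<le> R"
    proof (cases "u = 0")
      case True then show ?thesis using R0 K0 by (simp add: zero_ereal_def[symmetric])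
    next
      case False
      then have u: "u > 0" using u by simp
      show ?thesis
      proof (cases v)
        case (real r)
        note vr = this
        show ?thesis
        proof (cases R)
          case (real Rr)
          have "u * r - Rr \<le> K u"
          proof (rule Kgreat[OF u])
            fix u1 u2 :: real assume a: "u1 > 0" "u2 > 0" "u1 * u2 = u"
            have "ereal u1 * v - ereal (K1 u1) \<le> C1" unfolding C1_def using a by (intro conj_upper) simp
            then have "ereal u2 * (ereal u1 * v - ereal (K1 u1)) \<le> ereal u2 * C1"
              using a by (intro ereal_mult_left_mono) auto
            then have "ereal u2 * (ereal u1 * v - ereal (K1 u1)) - ereal (K2 u2) \<le> ereal u2 * C1 - ereal (K2 u2)"
              by (intro ereal_minus_mono) auto
            also have "\<dots> \<le> R" unfolding R_def using a by (intro conj_upper) simp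
            finally have "u2 * (u1 * r - K1 u1) - K2 u2 \<le> Rr" using vr \<open>R = ereal Rr\<close> by simp
            then show "u * r - Rr \<le> K2 u2 + u2 * K1 u1" using a by (simp add: algebra_simps)
          qed
          then show ?thesis using vr \<open>R = ereal Rr\<close> by simp
        qed (use R0 in auto)
      next
        case PInf
        have "ereal 1 * v - ereal (K1 1) \<le> C1" unfolding C1_def by (intro conj_upper) simp
        then have "C1 = \<infinity>" using PInf by simp
        have "ereal 1 * C1 - ereal (K2 1) \<le> R" unfolding R_def by (intro conj_upper) simp
        then have "R = \<infinity>" using \<open>C1 = \<infinity>\<close> by simp
        then show ?thesis by simp
      next
        case MInf
        then show ?thesis using u by simp
      qed
    qed
  qed
  moreover have "R \<le> L" unfolding R_def convex_conj_def
  proof (rule SUP_least)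
    fix u2 assume u2: "u2 \<in> {0::real..}"
    show "ereal u2 * C1 - ereal (K2 u2) \<le> L"
    proof (cases "u2 = 0")
      case True then show ?thesis using L0 K0 by (simp add: zero_ereal_def[symmetric])
    next
      case False
      then have u2: "u2 > 0" using u2 by simp
      show ?thesis
      proof (cases L)
        case (real Lr)
        have "C1 \<le> ereal ((Lr + K2 u2) / u2)" unfolding C1_def convex_conj_def
        proof (rule SUP_least)
          fix u1 assume u1: "u1 \<in> {0::real..}"
          show "ereal u1 * v - ereal (K1 u1) \<le> ereal ((Lr + K2 u2) / u2)"
          proof (cases "u1 = 0")
            case True
            have "0 \<le> (Lr + K2 u2) / u2" using L0 real nn2 u2 by simp
            then show ?thesis using True K0 by (simp add: zero_ereal_def[symmetric])
          next
            case False
            then have u1: "u1 > 0" using u1 by simp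
            show ?thesis
            proof (cases v)
              case (real r)
              have "ereal (u1 * u2) * v - ereal (K (u1 * u2)) \<le> L" unfolding L_def
                using u1 u2 by (intro conj_upper) simp
              then have "u1 * u2 * r - K (u1 * u2) \<le> Lr" using real \<open>L = ereal Lr\<close> by simp
              moreover have "K (u1 * u2) \<le> K2 u2 + u2 * K1 u1" using Klow u1 u2 by simp
              ultimately have "u2 * (u1 * r - K1 u1) \<le> Lr + K2 u2" by (simp add: algebra_simps)
              then have "u1 * r - K1 u1 \<le> (Lr + K2 u2) / u2" using u2 by (simp add: field_simps)
              then show ?thesis using real by simp
            next
              case PInf
              have "ereal 1 * v - ereal (K 1) \<le> L" unfolding L_def by (intro conj_upper) simp
              then show ?thesis using PInf real by simp
            next
              case MInf then show ?thesis using u1 by simp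
            qed
          qed
        qed
        then have "ereal u2 * C1 \<le> ereal u2 * ereal ((Lr + K2 u2) / u2)"
          using u2 by (intro ereal_mult_left_mono) auto
        also have "\<dots> = ereal (Lr + K2 u2)" using u2 by simp
        finally have "ereal u2 * C1 - ereal (K2 u2) \<le> ereal (Lr + K2 u2) - ereal (K2 u2)"
          by (intro ereal_minus_mono) auto
        then show ?thesis using real by simp
      qed (use L0 in auto)
    qed
  qed
  ultimately show ?thesis unfolding L_def R_def C1_def by simp
qed



lemma K_eq:
  assumes p1: "\<forall>s>0. \<beta>1 s > (0::real)" and p2: "\<forall>s>0. \<beta>2 s > (0::real)" and u: "u > 0"
  shows "Kfun (beta_comb \<beta>1 \<beta>2) u = Inf {Kfun \<beta>2 u2 + u2 * Kfun \<beta>1 u1 | u1 u2. u1 > 0 \<and> u2 > 0 \<and> u1 * u2 = u}"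
    (is "_ = Inf ?T")
proof -
  have elem: "Kfun \<beta>2 u2 + u2 * Kfun \<beta>1 u1 = u * ((1/u1) * \<beta>2 (1/u2) + \<beta>1 (1/u1))"
    if "u1 > 0" "u2 > 0" "u1 * u2 = u" for u1 u2
  proof -
    have "u * ((1/u1) * \<beta>2 (1/u2) + \<beta>1 (1/u1)) = (u/u1) * \<beta>2 (1/u2) + u * \<beta>1 (1/u1)"
      by (simp add: algebra_simps)
    also have "u/u1 = u2" using that by auto
    finally show ?thesis using that by (simp add: Kfun_def algebra_simps)
  qed
  have bdd: "bdd_below ?T"
    by (rule bdd_belowI[of _ 0]) (use p1 p2 in \<open>force simp: Kfun_def intro: add_nonneg_nonneg mult_nonneg_nonneg less_imp_le\<close>)
  have ne: "?T \<noteq> {}"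
  proof -
    have "Kfun \<beta>2 1 + 1 * Kfun \<beta>1 u \<in> ?T"
      using u by (intro CollectI exI[of _ u] exI[of _ "1::real"]) simp
    then show ?thesis by blast
  qed
  have a: "u * beta_comb \<beta>1 \<beta>2 (1/u) \<le> Inf ?T"
  proof (rule cInf_greatest[OF ne])
    fix t assume "t \<in> ?T"
    then obtain u1 u2 where b: "u1 > 0" "u2 > 0" "u1 * u2 = u" "t = Kfun \<beta>2 u2 + u2 * Kfun \<beta>1 u1" by blast
    have "beta_comb \<beta>1 \<beta>2 ((1/u1) * (1/u2)) \<le> (1/u1) * \<beta>2 (1/u2) + \<beta>1 (1/u1)"
      using bc_lower[OF p1 p2, of "1/u1" "1/u2"] b by simp
    moreover have "(1/u1) * (1/u2) = 1/u" using b by simp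
    ultimately have "u * beta_comb \<beta>1 \<beta>2 (1/u) \<le> u * ((1/u1) * \<beta>2 (1/u2) + \<beta>1 (1/u1))"
      using u by (intro mult_left_mono) auto
    then show "u * beta_comb \<beta>1 \<beta>2 (1/u) \<le> t" using elem[OF b(1-3)] b(4) by simp
  qed
  have "Inf ?T / u \<le> beta_comb \<beta>1 \<beta>2 (1/u)"
  proof (rule bc_greatest)
    show "1/u > 0" using u by simp
    fix s1 s2 :: real assume b: "s1 > 0" "s2 > 0" "s1 * s2 = 1/u"
    have uu: "(1/s1) * (1/s2) = u" using b u by (simp add: field_simps)
    then have "Kfun \<beta>2 (1/s2) + (1/s2) * Kfun \<beta>1 (1/s1) \<in> ?T" using b
      by (intro CollectI exI[of _ "1/s1"] exI[of _ "1/s2"]) simp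
    then have "Inf ?T \<le> Kfun \<beta>2 (1/s2) + (1/s2) * Kfun \<beta>1 (1/s1)" by (rule cInf_lower[OF _ bdd])
    also have "\<dots> = u * (s1 * \<beta>2 s2 + \<beta>1 s1)" using elem[of "1/s1" "1/s2"] b uu by simp
    finally show "Inf ?T / u \<le> s1 * \<beta>2 s2 + \<beta>1 s1" using u by (simp add: field_simps)
  qed
  then have "Inf ?T \<le> u * beta_comb \<beta>1 \<beta>2 (1/u)" using u by (simp add: field_simps)
  with a show ?thesis using u by (simp add: Kfun_def)
qed

lemma main_ineq:
  fixes N E1 E2 :: real and \<phi>1 \<phi>2 :: ennreal
  assumes p1: "\<forall>s>0. \<beta>1 s > (0::real)" and p2: "\<forall>s>0. \<beta>2 s > (0::real)"
    and d1: "antimono_on {0<..} \<beta>1" and d2: "antimono_on {0<..} \<beta>2"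
    and s: "s > 0"
    and W1: "\<forall>s>0. ereal N \<le> ereal (s * E1) + ereal (\<beta>1 s) * enn2ereal \<phi>1"
    and W2: "\<forall>s>0. ereal E1 \<le> ereal (s * E2) + ereal (\<beta>2 s) * enn2ereal \<phi>2"
  shows "ereal N \<le> ereal (s * E2) + ereal (beta_comb \<beta>1 \<beta>2 s) * enn2ereal (max \<phi>1 \<phi>2)"
proof (cases "max \<phi>1 \<phi>2 = \<infinity>")
  case True
  have "beta_comb \<beta>1 \<beta>2 s > 0" by (rule bc_pos[OF p1 p2 d1 d2 s])
  then show ?thesis using True by simp
next
  case False
  have f1: "\<phi>1 \<noteq> \<infinity>" using False by (cases "\<phi>1 \<le> \<phi>2") (auto simp: max_def top_unique)
  have f2: "\<phi>2 \<noteq> \<infinity>" using False by (cases "\<phi>1 \<le> \<phi>2") (auto simp: max_def top_unique)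
  note f = f1 f2
  obtain p1 where q1: "\<phi>1 = ennreal p1" "p1 \<ge> 0" using f(1) by (cases \<phi>1 rule: ennreal_cases) auto
  obtain p2 where q2: "\<phi>2 = ennreal p2" "p2 \<ge> 0" using f(2) by (cases \<phi>2 rule: ennreal_cases) auto
  note q = q1(1) q2(1) q1(2) q2(2)
  define m where "m = max p1 p2"
  have mm0: "max (ennreal p1) (ennreal p2) = ennreal (max p1 p2)"
  proof (cases "p1 \<le> p2")
    case True
    then have "ennreal p1 \<le> ennreal p2" by (rule ennreal_leI)
    then show ?thesis using True by (simp add: max_def)
  next
    case False
    then have "ennreal p2 \<le> ennreal p1" by (intro ennreal_leI) simp
    then show ?thesis using False by (simp add: max_def)
  qed
  have mm: "max \<phi>1 \<phi>2 = ennreal m" using mm0 q by (simp add: m_def)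
  have w1: "N \<le> s1 * E1 + \<beta>1 s1 * p1" if "s1 > 0" for s1
    using W1 that q by (auto simp: enn2ereal_ennreal)
  have w2: "E1 \<le> s2 * E2 + \<beta>2 s2 * p2" if "s2 > 0" for s2
    using W2 that q by (auto simp: enn2ereal_ennreal)
  have m0: "m \<ge> 0" using q m_def by simp
  have "N \<le> s * E2 + beta_comb \<beta>1 \<beta>2 s * m"
  proof (cases "m = 0")
    case True
    then have "p1 = 0" "p2 = 0" using q m_def by auto
    then show ?thesis using w1[of 1] w2[of s] s True by simp
  next
    case False
    then have mpos: "m > 0" using m0 by simp
    have "(N - s * E2) / m \<le> beta_comb \<beta>1 \<beta>2 s"
    proof (rule bc_greatest[OF s])
      fix s1 s2 :: real assume b: "s1 > 0" "s2 > 0" "s1 * s2 = s"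
      have b2: "\<beta>2 s2 > 0" using p2 b by simp
      have b1: "\<beta>1 s1 > 0" using p1 b by simp
      have pm1: "p1 \<le> m" "p2 \<le> m" using m_def by auto
      have c1: "s1 * E1 \<le> s1 * (s2 * E2 + \<beta>2 s2 * p2)"
        by (rule mult_left_mono[OF w2[OF b(2)] less_imp_le[OF b(1)]])
      have c2: "\<beta>2 s2 * p2 \<le> \<beta>2 s2 * m" by (rule mult_left_mono[OF pm1(2) less_imp_le[OF b2]])
      have c3: "\<beta>1 s1 * p1 \<le> \<beta>1 s1 * m" by (rule mult_left_mono[OF pm1(1) less_imp_le[OF b1]])
      have c4: "s1 * (\<beta>2 s2 * p2) \<le> s1 * (\<beta>2 s2 * m)" by (rule mult_left_mono[OF c2 less_imp_le[OF b(1)]])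
      have c5: "s1 * (s2 * E2 + \<beta>2 s2 * p2) = s * E2 + s1 * (\<beta>2 s2 * p2)"
        using b(3) by (simp add: algebra_simps)
      have c6: "(s1 * \<beta>2 s2 + \<beta>1 s1) * m = s1 * (\<beta>2 s2 * m) + \<beta>1 s1 * m" by (simp add: algebra_simps)
      have "N \<le> s * E2 + (s1 * \<beta>2 s2 + \<beta>1 s1) * m"
        using w1[OF b(1)] c1 c3 c4 c5 c6 by linarith
      then show "(N - s * E2) / m \<le> s1 * \<beta>2 s2 + \<beta>1 s1" using mpos by (simp add: field_simps)
    qed
    then show ?thesis using mpos by (simp add: field_simps)
  qed
  then show ?thesis using mm m0 by (simp add: enn2ereal_ennreal)
qed

theorem proposition32:
  fixes M :: "'a measure"
    and P1 P2 :: "'a \<Rightarrow> 'a measure"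
    and T1 T2 :: "('a \<Rightarrow> real) \<Rightarrow> ('a \<Rightarrow> real)"
    and \<beta>1 \<beta>2 :: "real \<Rightarrow> real"
    and \<Phi>1 \<Phi>2 :: "('a \<Rightarrow> real) \<Rightarrow> ennreal"
  assumes M: "prob_space M"
    and P1: "invariant_markov_kernel M P1" and P2: "invariant_markov_kernel M P2"
    and T1: "P_or_PstarP M P1 T1" and T2: "P_or_PstarP M P2 T2"
    and \<beta>1_pos: "\<forall>s>0. \<beta>1 s > 0" and \<beta>1_dec: "antimono_on {0<..} \<beta>1"
    and \<beta>1_lim: "(\<beta>1 \<longlongrightarrow> 0) at_top"
    and \<beta>2_pos: "\<forall>s>0. \<beta>2 s > 0" and \<beta>2_dec: "antimono_on {0<..} \<beta>2"
    and \<beta>2_lim: "(\<beta>2 \<longlongrightarrow> 0) at_top"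
    and \<Phi>1_hom: "\<forall>f\<in>L2 M. \<forall>c>0. \<Phi>1 (\<lambda>x. c * f x) = ennreal (c\<^sup>2) * \<Phi>1 f"
    and \<Phi>2_hom: "\<forall>f\<in>L2 M. \<forall>c>0. \<Phi>2 (\<lambda>x. c * f x) = ennreal (c\<^sup>2) * \<Phi>2 f"
    and \<Phi>1_P1: "\<forall>f\<in>L2 M. \<forall>n. \<Phi>1 ((kop P1 ^^ n) f) \<le> \<Phi>1 f"
    and \<Phi>2_P2: "\<forall>f\<in>L2 M. \<forall>n. \<Phi>2 ((kop P2 ^^ n) f) \<le> \<Phi>2 f"
    and \<Phi>1_a: "\<forall>f\<in>L2 M. ennreal (normsq_L2 M (\<lambda>x. f x - (\<integral>y. f y \<partial>M)))
                 \<le> a_const M \<Phi>1 * \<Phi>1 (\<lambda>x. f x - (\<integral>y. f y \<partial>M))"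
    and \<Phi>2_a: "\<forall>f\<in>L2 M. ennreal (normsq_L2 M (\<lambda>x. f x - (\<integral>y. f y \<partial>M)))
                 \<le> a_const M \<Phi>2 * \<Phi>2 (\<lambda>x. f x - (\<integral>y. f y \<partial>M))"
    and \<Phi>1_P2: "\<forall>f\<in>L2_0 M. \<forall>n. \<Phi>1 ((kop P2 ^^ n) f) \<le> \<Phi>1 f"
    and WPI1: "\<forall>s>0. \<forall>f\<in>L2_0 M. ereal (normsq_L2 M f)
                 \<le> ereal (s * dirichlet M T1 f) + ereal (\<beta>1 s) * enn2ereal (\<Phi>1 f)"
    and WPI2: "\<forall>s>0. \<forall>f\<in>L2_0 M. ereal (dirichlet M T1 f)
                 \<le> ereal (s * dirichlet M T2 f) + ereal (\<beta>2 s) * enn2ereal (\<Phi>2 f)"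
  shows "(\<forall>s>0. \<forall>f\<in>L2_0 M. ereal (normsq_L2 M f)
            \<le> ereal (s * dirichlet M T2 f)
               + ereal (beta_comb \<beta>1 \<beta>2 s) * enn2ereal (max (\<Phi>1 f) (\<Phi>2 f)))
       \<and> (\<forall>s>0. beta_comb \<beta>1 \<beta>2 s > 0)
       \<and> antimono_on {0<..} (beta_comb \<beta>1 \<beta>2)
       \<and> (beta_comb \<beta>1 \<beta>2 \<longlongrightarrow> 0) at_top
       \<and> (\<forall>f\<in>L2 M. \<forall>c>0. max (\<Phi>1 (\<lambda>x. c * f x)) (\<Phi>2 (\<lambda>x. c * f x))
                            = ennreal (c\<^sup>2) * max (\<Phi>1 f) (\<Phi>2 f))
       \<and> (\<forall>f\<in>L2_0 M. \<forall>n. max (\<Phi>1 ((kop P2 ^^ n) f)) (\<Phi>2 ((kop P2 ^^ n) f))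
                            \<le> max (\<Phi>1 f) (\<Phi>2 f))
       \<and> (\<forall>u>0. Kfun (beta_comb \<beta>1 \<beta>2) u
              = Inf {Kfun \<beta>2 u2 + u2 * Kfun \<beta>1 u1 | u1 u2. u1 > 0 \<and> u2 > 0 \<and> u1 * u2 = u})
       \<and> convex_conj (Kfun (beta_comb \<beta>1 \<beta>2)) = convex_conj (Kfun \<beta>2) \<circ> convex_conj (Kfun \<beta>1)"
proof -
  have A: "\<forall>s>0. \<forall>f\<in>L2_0 M. ereal (normsq_L2 M f)
            \<le> ereal (s * dirichlet M T2 f)
               + ereal (beta_comb \<beta>1 \<beta>2 s) * enn2ereal (max (\<Phi>1 f) (\<Phi>2 f))"
  proof (intro allI impI ballI)
    fix s :: real and f assume s: "s > 0" and f: "f \<in> L2_0 M"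
    show "ereal (normsq_L2 M f) \<le> ereal (s * dirichlet M T2 f)
               + ereal (beta_comb \<beta>1 \<beta>2 s) * enn2ereal (max (\<Phi>1 f) (\<Phi>2 f))"
      by (rule main_ineq[OF \<beta>1_pos \<beta>2_pos \<beta>1_dec \<beta>2_dec s]) (use WPI1 WPI2 f in auto)
  qed
  have B: "\<forall>f\<in>L2 M. \<forall>c>0. max (\<Phi>1 (\<lambda>x. c * f x)) (\<Phi>2 (\<lambda>x. c * f x))
                            = ennreal (c\<^sup>2) * max (\<Phi>1 f) (\<Phi>2 f)"
  proof (intro allI impI ballI)
    fix f and c :: real assume f: "f \<in> L2 M" and c: "c > 0"
    have h1: "\<Phi>1 (\<lambda>x. c * f x) = ennreal (c\<^sup>2) * \<Phi>1 f" using \<Phi>1_hom f c by blast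
    have h2: "\<Phi>2 (\<lambda>x. c * f x) = ennreal (c\<^sup>2) * \<Phi>2 f" using \<Phi>2_hom f c by blast
    show "max (\<Phi>1 (\<lambda>x. c * f x)) (\<Phi>2 (\<lambda>x. c * f x)) = ennreal (c\<^sup>2) * max (\<Phi>1 f) (\<Phi>2 f)"
      unfolding h1 h2
    proof (cases "\<Phi>1 f \<le> \<Phi>2 f")
      case True
      then have "ennreal (c\<^sup>2) * \<Phi>1 f \<le> ennreal (c\<^sup>2) * \<Phi>2 f" by (rule mult_left_mono) simp
      then show "max (ennreal (c\<^sup>2) * \<Phi>1 f) (ennreal (c\<^sup>2) * \<Phi>2 f) = ennreal (c\<^sup>2) * max (\<Phi>1 f) (\<Phi>2 f)"
        using True by (simp add: max.absorb2)
    next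
      case False
      then have F: "\<Phi>2 f \<le> \<Phi>1 f" by simp
      then have "ennreal (c\<^sup>2) * \<Phi>2 f \<le> ennreal (c\<^sup>2) * \<Phi>1 f" by (rule mult_left_mono) simp
      then show "max (ennreal (c\<^sup>2) * \<Phi>1 f) (ennreal (c\<^sup>2) * \<Phi>2 f) = ennreal (c\<^sup>2) * max (\<Phi>1 f) (\<Phi>2 f)"
        using F by (simp add: max.absorb1)
    qed
  qed
  have C: "\<forall>f\<in>L2_0 M. \<forall>n. max (\<Phi>1 ((kop P2 ^^ n) f)) (\<Phi>2 ((kop P2 ^^ n) f))
                            \<le> max (\<Phi>1 f) (\<Phi>2 f)"
  proof (intro allI impI ballI)
    fix f and n :: nat assume f: "f \<in> L2_0 M"
    then have f2: "f \<in> L2 M" by (simp add: L2_0_def)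
    show "max (\<Phi>1 ((kop P2 ^^ n) f)) (\<Phi>2 ((kop P2 ^^ n) f)) \<le> max (\<Phi>1 f) (\<Phi>2 f)"
      by (rule max.mono) (use \<Phi>1_P2 \<Phi>2_P2 f f2 in blast)+
  qed
  have D: "\<forall>u>0. Kfun (beta_comb \<beta>1 \<beta>2) u
              = Inf {Kfun \<beta>2 u2 + u2 * Kfun \<beta>1 u1 | u1 u2. u1 > 0 \<and> u2 > 0 \<and> u1 * u2 = u}"
    using K_eq[OF \<beta>1_pos \<beta>2_pos] by blast
  have nn: "\<forall>u\<ge>0. Kfun \<beta> u \<ge> 0" if "\<forall>s>0. \<beta> s > (0::real)" for \<beta>
    using that by (auto simp: Kfun_def less_imp_le)
  have E: "convex_conj (Kfun (beta_comb \<beta>1 \<beta>2)) = convex_conj (Kfun \<beta>2) \<circ> convex_conj (Kfun \<beta>1)"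
  proof
    fix v
    show "convex_conj (Kfun (beta_comb \<beta>1 \<beta>2)) v = (convex_conj (Kfun \<beta>2) \<circ> convex_conj (Kfun \<beta>1)) v"
      unfolding comp_def
      by (rule conj_comp) (use D nn[OF \<beta>1_pos] nn[OF \<beta>2_pos] in \<open>auto simp: Kfun_def\<close>)
  qed
  show ?thesis
    using A B C D E bc_pos[OF \<beta>1_pos \<beta>2_pos \<beta>1_dec \<beta>2_dec]
      bc_antimono[OF \<beta>1_pos \<beta>2_pos \<beta>2_dec] bc_lim[OF \<beta>1_pos \<beta>2_pos \<beta>1_dec \<beta>2_dec \<beta>1_lim \<beta>2_lim]
    by blast
qed

end
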